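(* Let $r\ge1$. For any $\gamma\in\mathrm{GL}_r(F_\infty)$ there exist positive constants $c_1,c_2,c_3$ such that for every $\omega\in\Omega^r$: (a) $h(\omega)\le c_1|j(\gamma,\omega)|\,|\omega|^{-1}\le1$; (b) $|\gamma(\omega)|\le c_2\,h(\omega)^{-1}$; (c) $h(\gamma(\omega))\ge c_3\,h(\omega)$.
   Context: Let $F$ be a global function field, $\infty$ a place, $F_\infty$ the completion at $\infty$, $\mathbb{C}_\infty$ the completion of an algebraic closure of $F_\infty$ with absolute value $|\cdot|$. Fix $\xi\in\mathbb{C}_\infty^\times$. $\Omega^r$ is the set of column vectors $\omega=(\omega_1,\dots,\omega_r)^T\in\mathbb{C}_\infty^r$ with $F_\infty$-linearly independent entries and $\omega_r=\xi$. For $\gamma\in\mathrm{GL}_r(F_\infty)$: $j(\gamma,\omega):=\xi^{-1}\cdot(\text{last entry of }\gamma\omega)$ and $\gamma(\omega):=j(\gamma,\omega)^{-1}\gamma\omega\in\Omega^r$. A linear form $F_\infty^r\to F_\infty$ is unimodular if its largest coefficient has absolute value $1$. Put $|\omega|:=\max_i|\omega_i|$ and $h(\omega):=|\omega|^{-1}\inf\{|\ell(\omega)|:\ell$ a unimodular $F_\infty$-linear form$\}$. *)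

theory Defs
  imports "HOL-Computational_Algebra.Polynomial"
begin

text \<open>The field C_infinity is modelled by a type 'a of class field carrying a function
 av :: 'a => real (the absolute value); F_infinity is a subset K of 'a.\<close>

definition nonarch_abs :: "('a::field \<Rightarrow> real) \<Rightarrow> bool" where
  "nonarch_abs av \<longleftrightarrow>
     (\<forall>x. 0 \<le> av x) \<and> (\<forall>x. av x = 0 \<longleftrightarrow> x = 0) \<and>
     (\<forall>x y. av (x * y) = av x * av y) \<and> (\<forall>x y. av (x + y) \<le> max (av x) (av y))"

definition av_cauchy :: "('a::field \<Rightarrow> real) \<Rightarrow> (nat \<Rightarrow> 'a) \<Rightarrow> bool" where
  "av_cauchy av X \<longleftrightarrow> (\<forall>e>0. \<exists>N. \<forall>m\<ge>N. \<forall>n\<ge>N. av (X m - X n) < e)"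

definition av_lim :: "('a::field \<Rightarrow> real) \<Rightarrow> (nat \<Rightarrow> 'a) \<Rightarrow> 'a \<Rightarrow> bool" where
  "av_lim av X L \<longleftrightarrow> (\<forall>e>0. \<exists>N. \<forall>n\<ge>N. av (X n - L) < e)"

definition is_subfield :: "'a::field set \<Rightarrow> bool" where
  "is_subfield K \<longleftrightarrow> 0 \<in> K \<and> 1 \<in> K \<and> (\<forall>x\<in>K. \<forall>y\<in>K. x + y \<in> K \<and> x * y \<in> K) \<and>
     (\<forall>x\<in>K. - x \<in> K \<and> inverse x \<in> K)"

definition algebraic_over :: "'a::field set \<Rightarrow> 'a \<Rightarrow> bool" where
  "algebraic_over K z \<longleftrightarrow> (\<exists>p. p \<noteq> 0 \<and> (\<forall>i. coeff p i \<in> K) \<and> poly p z = 0)"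

text \<open>Standing setup: K (= F_infinity) is a local field of positive characteristic
 (complete, discretely valued, finite residue field), i.e. the completion of a global
 function field at a place; 'a with av is (up to isometry) the completion C_infinity of an
 algebraic closure of K: complete, algebraically closed, with the algebraic closure of K dense.\<close>

definition Cinf_setup :: "('a::field \<Rightarrow> real) \<Rightarrow> 'a set \<Rightarrow> bool" where
  "Cinf_setup av K \<longleftrightarrow>
     nonarch_abs av \<and> is_subfield K \<and>
     (\<exists>p. prime p \<and> of_nat p = (0::'a)) \<and>
     (\<forall>X. av_cauchy av X \<longrightarrow> (\<exists>L. av_lim av X L)) \<and>
     (\<forall>X L. (\<forall>n. X n \<in> K) \<longrightarrow> av_lim av X L \<longrightarrow> L \<in> K) \<and>
     (\<exists>\<rho>::real. 0 < \<rho> \<and> \<rho> < 1 \<and> av ` (K - {0}) = range (\<lambda>n::int. \<rho> powi n)) \<and>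
     (\<exists>R. finite R \<and> R \<subseteq> K \<and> (\<forall>x\<in>K. av x \<le> 1 \<longrightarrow> (\<exists>c\<in>R. av (x - c) < 1))) \<and>
     (\<forall>q::'a poly. 0 < degree q \<longrightarrow> (\<exists>z. poly q z = 0)) \<and>
     (\<forall>z. \<forall>e>0. \<exists>y. algebraic_over K y \<and> av (z - y) < e)"

text \<open>Column vectors in C^r are functions nat => 'a (only indices < r matter);
 r x r matrices are functions nat => nat => 'a; index r-1 is the last entry.\<close>

definition GL_K :: "'a::field set \<Rightarrow> nat \<Rightarrow> (nat \<Rightarrow> nat \<Rightarrow> 'a) set" where
  "GL_K K r = {g. (\<forall>i<r. \<forall>k<r. g i k \<in> K) \<and>
      (\<exists>d. (\<forall>i<r. \<forall>k<r. d i k \<in> K) \<and>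
           (\<forall>i<r. \<forall>k<r. (\<Sum>l<r. g i l * d l k) = (if i = k then 1 else 0)) \<and>
           (\<forall>i<r. \<forall>k<r. (\<Sum>l<r. d i l * g l k) = (if i = k then 1 else 0)))}"

definition Omega :: "'a::field set \<Rightarrow> nat \<Rightarrow> 'a \<Rightarrow> (nat \<Rightarrow> 'a) set" where
  "Omega K r \<xi> = {w. (\<forall>a. (\<forall>i<r. a i \<in> K) \<longrightarrow> (\<Sum>i<r. a i * w i) = 0 \<longrightarrow> (\<forall>i<r. a i = 0))
                   \<and> w (r - 1) = \<xi>}"

definition matvec :: "nat \<Rightarrow> (nat \<Rightarrow> nat \<Rightarrow> 'a::field) \<Rightarrow> (nat \<Rightarrow> 'a) \<Rightarrow> nat \<Rightarrow> 'a" where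
  "matvec r g w = (\<lambda>i. \<Sum>k<r. g i k * w k)"

definition jfac :: "nat \<Rightarrow> 'a::field \<Rightarrow> (nat \<Rightarrow> nat \<Rightarrow> 'a) \<Rightarrow> (nat \<Rightarrow> 'a) \<Rightarrow> 'a" where
  "jfac r \<xi> g w = inverse \<xi> * matvec r g w (r - 1)"

definition gact :: "nat \<Rightarrow> 'a::field \<Rightarrow> (nat \<Rightarrow> nat \<Rightarrow> 'a) \<Rightarrow> (nat \<Rightarrow> 'a) \<Rightarrow> nat \<Rightarrow> 'a" where
  "gact r \<xi> g w = (\<lambda>i. inverse (jfac r \<xi> g w) * matvec r g w i)"

definition vnorm :: "('a::field \<Rightarrow> real) \<Rightarrow> nat \<Rightarrow> (nat \<Rightarrow> 'a) \<Rightarrow> real" where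
  "vnorm av r w = Max ((\<lambda>i. av (w i)) ` {..<r})"

definition unimodular :: "('a::field \<Rightarrow> real) \<Rightarrow> 'a set \<Rightarrow> nat \<Rightarrow> (nat \<Rightarrow> 'a) \<Rightarrow> bool" where
  "unimodular av K r l \<longleftrightarrow> (\<forall>i<r. l i \<in> K) \<and> Max ((\<lambda>i. av (l i)) ` {..<r}) = 1"

definition hgt :: "('a::field \<Rightarrow> real) \<Rightarrow> 'a set \<Rightarrow> nat \<Rightarrow> (nat \<Rightarrow> 'a) \<Rightarrow> real" where
  "hgt av K r w = inverse (vnorm av r w) *
     Inf {av (\<Sum>i<r. l i * w i) | l. unimodular av K r l}"

end

theory Submission imports Defs begin

context
  fixes av :: "'a::field \<Rightarrow> real"
  assumes na: "nonarch_abs av"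
begin

lemma av_nonneg: "0 \<le> av x" using na unfolding nonarch_abs_def by blast
lemma av_zero_iff: "av x = 0 \<longleftrightarrow> x = 0" using na unfolding nonarch_abs_def by blast
lemma av_mult: "av (x * y) = av x * av y" using na unfolding nonarch_abs_def by blast
lemma av_add: "av (x + y) \<le> max (av x) (av y)" using na unfolding nonarch_abs_def by blast
lemma av_0[simp]: "av 0 = 0" using av_zero_iff by blast
lemma av_pos: "x \<noteq> 0 \<Longrightarrow> 0 < av x" using av_nonneg av_zero_iff by (metis less_eq_real_def)
lemma av_1[simp]: "av 1 = 1"
proof -
  have "av 1 = av 1 * av 1" using av_mult[of 1 1] by simp
  moreover have "av 1 \<noteq> 0" using av_zero_iff by simp
  ultimately show ?thesis by (metis mult_cancel_left1)
qed
lemma av_m1[simp]: "av (-1) = 1"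
proof -
  have "av (-1) * av (-1) = 1" using av_mult[of "-1" "-1"] by simp
  then show ?thesis using av_nonneg[of "-1"]
    by (metis abs_of_nonneg abs_square_eq_1 power2_eq_square)
qed
lemma av_uminus[simp]: "av (- x) = av x"
  using av_mult[of "-1" x] by simp
lemma av_inverse: "av (inverse x) = inverse (av x)"
proof (cases "x = 0")
  case False
  have "av (inverse x) * av x = 1" using av_mult[of "inverse x" x] False by simp
  then show ?thesis by (metis inverse_unique mult.commute)
qed simp
lemma av_diff: "av (x - y) \<le> max (av x) (av y)"
  using av_add[of x "-y"] by simp
lemma av_sum_le:
  assumes "\<And>i. i < (n::nat) \<Longrightarrow> av (f i) \<le> B" "0 \<le> B"
  shows "av (\<Sum>i<n. f i) \<le> B"
proof -
  have "\<forall>m. m \<le> n \<longrightarrow> av (\<Sum>i<m. f i) \<le> B"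
  proof (intro allI)
    fix m show "m \<le> n \<longrightarrow> av (\<Sum>i<m. f i) \<le> B"
    proof (induction m)
      case 0 then show ?case using assms by simp
    next
      case (Suc m)
      show ?case
      proof
        assume m: "Suc m \<le> n"
        have "av (\<Sum>i<Suc m. f i) \<le> max (av (\<Sum>i<m. f i)) (av (f m))"
          using av_add by simp
        also have "\<dots> \<le> B" using Suc m assms(1)[of m] by simp
        finally show "av (\<Sum>i<Suc m. f i) \<le> B" .
      qed
    qed
  qed
  then show ?thesis by simp
qed


lemma sf_facts:
  assumes "is_subfield K"
  shows "0 \<in> K" "1 \<in> K" "x \<in> K \<Longrightarrow> y \<in> K \<Longrightarrow> x + y \<in> K"
    "x \<in> K \<Longrightarrow> y \<in> K \<Longrightarrow> x * y \<in> K" "x \<in> K \<Longrightarrow> - x \<in> K"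
    "x \<in> K \<Longrightarrow> inverse x \<in> K" "x \<in> K \<Longrightarrow> y \<in> K \<Longrightarrow> x - y \<in> K"
proof -
  have h: "0 \<in> K" "1 \<in> K" "\<And>x y. x \<in> K \<Longrightarrow> y \<in> K \<Longrightarrow> x + y \<in> K \<and> x * y \<in> K"
    "\<And>x. x \<in> K \<Longrightarrow> - x \<in> K \<and> inverse x \<in> K"
    using assms unfolding is_subfield_def by blast+
  show "0 \<in> K" "1 \<in> K" using h by blast+
  show "x \<in> K \<Longrightarrow> y \<in> K \<Longrightarrow> x + y \<in> K" using h(3) by blast
  show "x \<in> K \<Longrightarrow> y \<in> K \<Longrightarrow> x * y \<in> K" using h(3) by blast
  show "x \<in> K \<Longrightarrow> - x \<in> K" using h(4) by blast
  show "x \<in> K \<Longrightarrow> inverse x \<in> K" using h(4) by blast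
  show "x \<in> K \<Longrightarrow> y \<in> K \<Longrightarrow> x - y \<in> K" using h(3,4) by (metis diff_conv_add_uminus)
qed

lemma indep_bound:
  fixes n :: nat and w :: "nat \<Rightarrow> 'a"
  assumes sf: "is_subfield K"
    and comp: "\<forall>X. av_cauchy av X \<longrightarrow> (\<exists>L. av_lim av X L)"
    and cl: "\<forall>X L. (\<forall>n. X n \<in> K) \<longrightarrow> av_lim av X L \<longrightarrow> L \<in> K"
  shows "(\<forall>a. (\<forall>i<n. a i \<in> K) \<longrightarrow> (\<Sum>i<n. a i * w i) = 0 \<longrightarrow> (\<forall>i<n. a i = 0)) \<Longrightarrow>
    \<exists>c>0. \<forall>a. (\<forall>i<n. a i \<in> K) \<longrightarrow> (\<forall>i<n. c * av (a i) \<le> av (\<Sum>i<n. a i * w i))"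
proof (induction n)
  case 0
  show ?case by (rule exI[of _ 1]) simp
next
  case (Suc n)
  note ind = Suc.prems
  have indn: "\<forall>a. (\<forall>i<n. a i \<in> K) \<longrightarrow> (\<Sum>i<n. a i * w i) = 0 \<longrightarrow> (\<forall>i<n. a i = 0)"
  proof (intro allI impI)
    fix a i assume aK: "\<forall>i<n. a i \<in> K" and s0: "(\<Sum>i<n. a i * w i) = 0" and i: "i < n"
    define a' where "a' = a(n := 0)"
    have "\<forall>i<Suc n. a' i \<in> K" using aK sf_facts(1)[OF sf] by (auto simp: a'_def less_Suc_eq)
    moreover have "(\<Sum>i<Suc n. a' i * w i) = 0"
    proof -
      have "(\<Sum>i<n. a' i * w i) = (\<Sum>i<n. a i * w i)"
        by (rule sum.cong) (auto simp: a'_def)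
      then show ?thesis using s0 by (simp add: a'_def)
    qed
    ultimately have "\<forall>i<Suc n. a' i = 0" using ind by blast
    then have "a' i = 0" using i by simp
    then show "a i = 0" using i by (simp add: a'_def)
  qed
  from Suc.IH[OF indn] obtain c where c0: "c > 0"
    and cb: "\<And>a i. (\<forall>i<n. a i \<in> K) \<Longrightarrow> i < n \<Longrightarrow> c * av (a i) \<le> av (\<Sum>i<n. a i * w i)"
    by blast
  have "\<exists>d>0. \<forall>a. (\<forall>i<n. a i \<in> K) \<longrightarrow> d \<le> av (w n - (\<Sum>i<n. a i * w i))"
  proof (rule ccontr)
    assume "\<not> ?thesis"
    then have small: "\<And>d. d > 0 \<Longrightarrow> \<exists>a. (\<forall>i<n. a i \<in> K) \<and> av (w n - (\<Sum>i<n. a i * w i)) < d"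
      by (auto simp: not_le)
    define A where "A m = (SOME a. (\<forall>i<n. a i \<in> K) \<and> av (w n - (\<Sum>i<n. a i * w i)) < 1 / real (Suc m))" for m
    define E where "E m = w n - (\<Sum>i<n. A m i * w i)" for m
    have A: "(\<forall>i<n. A m i \<in> K) \<and> av (E m) < 1 / real (Suc m)" for m
    proof -
      have "\<exists>a. (\<forall>i<n. a i \<in> K) \<and> av (w n - (\<Sum>i<n. a i * w i)) < 1 / real (Suc m)"
        by (rule small) simp
      then show ?thesis unfolding A_def E_def by (rule someI_ex)
    qed
    have diff: "c * av (A m i - A k i) \<le> max (av (E m)) (av (E k))" if i: "i < n" for m k i
    proof -
      have "(\<Sum>i<n. (A m i - A k i) * w i) = (\<Sum>i<n. A m i * w i) - (\<Sum>i<n. A k i * w i)"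
        by (simp add: left_diff_distrib sum_subtractf)
      then have "(\<Sum>i<n. (A m i - A k i) * w i) = E k - E m"
        by (simp add: E_def)
      moreover have "\<forall>i<n. A m i - A k i \<in> K" using A sf_facts(7)[OF sf] by simp
      ultimately have "c * av (A m i - A k i) \<le> av (E k - E m)"
        using cb[of "\<lambda>i. A m i - A k i" i] i by simp
      also have "\<dots> \<le> max (av (E m)) (av (E k))" using av_diff by (simp add: max.commute)
      finally show ?thesis .
    qed
    have cauchy: "av_cauchy av (\<lambda>m. A m i)" if i: "i < n" for i
      unfolding av_cauchy_def
    proof (intro allI impI)
      fix e :: real assume e: "e > 0"
      obtain N where N: "inverse (real (Suc N)) < c * e" using reals_Archimedean[of "c * e"] c0 e by auto
      show "\<exists>N. \<forall>m\<ge>N. \<forall>k\<ge>N. av (A m i - A k i) < e"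
      proof (rule exI[of _ N], intro allI impI)
        fix m k assume m: "N \<le> m" and k: "N \<le> k"
        have "1 / real (Suc m) \<le> 1 / real (Suc N)" using m by (intro frac_le) auto
        moreover have "1 / real (Suc k) \<le> 1 / real (Suc N)" using k by (intro frac_le) auto
        ultimately have "max (av (E m)) (av (E k)) < c * e"
          using A[of m] A[of k] N by (simp add: inverse_eq_divide)
        then have "c * av (A m i - A k i) < c * e" using diff[OF i, of m k] by linarith
        then show "av (A m i - A k i) < e" using c0 by simp
      qed
    qed
    have "\<exists>L. av_lim av (\<lambda>m. A m i) L" if "i < n" for i
      using comp[rule_format, OF cauchy[OF that]] .
    then have "\<forall>i. \<exists>L. i < n \<longrightarrow> av_lim av (\<lambda>m. A m i) L" by blast
    from choice[OF this] obtain L where L0: "\<forall>i. i < n \<longrightarrow> av_lim av (\<lambda>m. A m i) (L i)" by blast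
    then have L: "\<And>i. i < n \<Longrightarrow> av_lim av (\<lambda>m. A m i) (L i)" by blast
    have LK: "L i \<in> K" if "i < n" for i
    proof -
      have "\<forall>m. A m i \<in> K" using A that by blast
      then show ?thesis using cl[rule_format, OF _ L[OF that]] by simp
    qed
    define b where "b i = (if i < n then L i else -1)" for i
    have bK: "\<forall>i<Suc n. b i \<in> K" using LK sf_facts(2,5)[OF sf] by (auto simp: b_def)
    define z where "z = (\<Sum>i<n. L i * w i) - w n"
    have zeq: "(\<Sum>i<Suc n. b i * w i) = z"
    proof -
      have "(\<Sum>i<n. b i * w i) = (\<Sum>i<n. L i * w i)" by (rule sum.cong) (auto simp: b_def)
      then show ?thesis by (simp add: b_def z_def)
    qed
    have zsmall: "av z < e" if e: "e > 0" for e
    proof -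
      define B where "B = 1 + (\<Sum>i<n. av (w i))"
      have Bw: "av (w i) \<le> B" if "i < n" for i
      proof -
        have "av (w i) \<le> (\<Sum>i<n. av (w i))"
          by (rule member_le_sum) (use that av_nonneg in auto)
        then show ?thesis by (simp add: B_def)
      qed
      have "0 \<le> (\<Sum>i<n. av (w i))" by (rule sum_nonneg) (simp add: av_nonneg)
      then have B0: "B > 0" unfolding B_def by linarith
      define e' where "e' = e / (2 * B)"
      have e'0: "e' > 0" using e B0 by (simp add: e'_def)
      have "\<forall>i. \<exists>N. i < n \<longrightarrow> (\<forall>m\<ge>N. av (A m i - L i) < e')"
        using L e'0 unfolding av_lim_def by blast
      from choice[OF this] obtain Nf where Nf0: "\<forall>i. i < n \<longrightarrow> (\<forall>m\<ge>Nf i. av (A m i - L i) < e')" by blast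
      then have Nf: "\<And>i m. i < n \<Longrightarrow> Nf i \<le> m \<Longrightarrow> av (A m i - L i) < e'" by blast
      obtain N0 where N0: "inverse (real (Suc N0)) < e" using reals_Archimedean[OF e] by auto
      define N where "N = N0 + (\<Sum>i<n. Nf i)"
      have NN: "Nf i \<le> N" if "i < n" for i
      proof -
        have "Nf i \<le> (\<Sum>i<n. Nf i)" by (rule member_le_sum) (use that in auto)
        then show ?thesis by (simp add: N_def)
      qed
      have "(\<Sum>i<n. (L i - A N i) * w i) = (\<Sum>i<n. L i * w i) - (\<Sum>i<n. A N i * w i)"
        by (simp add: left_diff_distrib sum_subtractf)
      then have "z = (\<Sum>i<n. (L i - A N i) * w i) - E N"
        by (simp add: z_def E_def)
      then have "av z \<le> max (av (\<Sum>i<n. (L i - A N i) * w i)) (av (E N))"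
        using av_diff by simp
      moreover have "av (\<Sum>i<n. (L i - A N i) * w i) \<le> e' * B"
      proof (rule av_sum_le)
        fix i assume i: "i < n"
        have "av (L i - A N i) = av (A N i - L i)"
          using av_uminus[of "A N i - L i"] by simp
        then have "av (L i - A N i) \<le> e'" using Nf[OF i NN[OF i]] by simp
        then show "av ((L i - A N i) * w i) \<le> e' * B"
          unfolding av_mult by (rule mult_mono) (use Bw[OF i] av_nonneg e'0 in auto)
      next
        show "0 \<le> e' * B" using e'0 B0 by simp
      qed
      moreover have "e' * B < e" using e B0 by (simp add: e'_def)
      moreover have "av (E N) < e"
      proof -
        have "N0 \<le> N" by (simp add: N_def)
        then have "1 / real (Suc N) \<le> 1 / real (Suc N0)" by (intro frac_le) auto
        then show ?thesis using A[of N] N0 by (simp add: inverse_eq_divide)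
      qed
      ultimately show ?thesis by linarith
    qed
    have "av z = 0"
    proof (rule ccontr)
      assume "av z \<noteq> 0"
      then have "av z > 0" using av_nonneg[of z] by linarith
      then show False using zsmall[of "av z"] by simp
    qed
    then have "(\<Sum>i<Suc n. b i * w i) = 0" using zeq av_zero_iff by simp
    then have "b n = 0" using ind bK by blast
    then show False by (simp add: b_def)
  qed
  then obtain d where d0: "d > 0"
    and db: "\<And>a. (\<forall>i<n. a i \<in> K) \<Longrightarrow> d \<le> av (w n - (\<Sum>i<n. a i * w i))" by blast
  define M where "M = max 1 (av (w n) / d)"
  have M1: "M \<ge> 1" by (simp add: M_def)
  define c' where "c' = min d (c / M)"
  have c'0: "c' > 0" using d0 c0 M1 by (simp add: c'_def)
  have c'c: "c' \<le> c"
  proof -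
    have "c / M \<le> c" using c0 M1 by (simp add: divide_le_eq)
    then show ?thesis by (simp add: c'_def)
  qed
  show ?case
  proof (intro exI[of _ c'] conjI allI impI c'0)
    fix a i assume aK: "\<forall>i<Suc n. a i \<in> K" and i: "i < Suc n"
    define S where "S = (\<Sum>i<n. a i * w i)"
    define x where "x = (\<Sum>i<Suc n. a i * w i)"
    have xS: "x = S + a n * w n" by (simp add: x_def S_def)
    have aKn: "\<forall>i<n. a i \<in> K" using aK by simp
    show "c' * av (a i) \<le> av x"
    proof (cases "a n = 0")
      case True
      show ?thesis
      proof (cases "i < n")
        case True
        have "c' * av (a i) \<le> c * av (a i)" by (rule mult_right_mono[OF c'c av_nonneg])
        also have "\<dots> \<le> av S" unfolding S_def using cb[OF aKn True] .
        finally show ?thesis using xS \<open>a n = 0\<close> by simp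
      next
        case False
        then have "i = n" using i by simp
        then show ?thesis using \<open>a n = 0\<close> av_nonneg by simp
      qed
    next
      case False
      define a' where "a' j = - (a j * inverse (a n))" for j
      have a'K: "\<forall>j<n. a' j \<in> K" using aK sf_facts(4,5,6)[OF sf] by (simp add: a'_def)
      have t: "(\<Sum>j<n. a n * (a' j * w j)) = - S" unfolding S_def sum_negf[symmetric]
        by (rule sum.cong) (use False in \<open>auto simp: a'_def field_simps\<close>)
      have "a n * (w n - (\<Sum>j<n. a' j * w j)) = a n * w n - (\<Sum>j<n. a n * (a' j * w j))"
        by (simp add: right_diff_distrib sum_distrib_left)
      then have "x = a n * (w n - (\<Sum>j<n. a' j * w j))" using t xS by simp
      moreover have "d * av (a n) \<le> av (w n - (\<Sum>j<n. a' j * w j)) * av (a n)"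
        by (rule mult_right_mono[OF db[OF a'K] av_nonneg])
      ultimately have hx: "d * av (a n) \<le> av x" by (simp add: av_mult mult.commute)
      show ?thesis
      proof (cases "i < n")
        case True
        have "S = x - a n * w n" using xS by simp
        then have "av S \<le> max (av x) (av (a n * w n))" using av_diff[of x "a n * w n"] by simp
        then have "av S \<le> max (av x) (av (a n) * av (w n))" by (simp add: av_mult)
        moreover have "av (a n) * av (w n) \<le> av x * M"
        proof -
          have "av (a n) \<le> av x / d" using hx d0 by (simp add: le_divide_eq mult.commute)
          then have "av (a n) * av (w n) \<le> av x / d * av (w n)"
            by (rule mult_right_mono) (simp_all add: av_nonneg)
          also have "\<dots> = av x * (av (w n) / d)" by simp
          also have "\<dots> \<le> av x * M" by (rule mult_left_mono) (simp_all add: M_def av_nonneg)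
          finally show ?thesis .
        qed
        moreover have "av x \<le> av x * M" using mult_left_mono[OF M1 av_nonneg[of x]] by simp
        ultimately have "av S \<le> av x * M" by linarith
        then have "c * av (a i) \<le> av x * M" using cb[OF aKn True] by (simp add: S_def)
        then have "c / M * av (a i) \<le> av x" using M1 by (simp add: divide_le_eq mult.commute)
        moreover have "c' * av (a i) \<le> c / M * av (a i)"
          by (rule mult_right_mono) (simp_all add: c'_def av_nonneg)
        ultimately show ?thesis by linarith
      next
        case False
        then have "i = n" using i by simp
        have "c' * av (a n) \<le> d * av (a n)" by (rule mult_right_mono) (simp_all add: c'_def av_nonneg)
        then show ?thesis using hx \<open>i = n\<close> by simp
      qed
    qed
  qed
qed


definition Iset :: "'a set \<Rightarrow> nat \<Rightarrow> (nat \<Rightarrow> 'a) \<Rightarrow> real set" where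
  "Iset K r w = {av (\<Sum>(i::nat)<r. (l::nat \<Rightarrow> 'a) i * w i) | l. unimodular av K r l}"

lemma hgt_eq: "hgt av K r w = inverse (vnorm av r w) * Inf (Iset K r w)"
  unfolding hgt_def Iset_def by simp

lemma vnorm_ge: "i < r \<Longrightarrow> av (v i) \<le> vnorm av r v"
  unfolding vnorm_def by (rule Max_ge) auto

lemma vnorm_attained: "1 \<le> r \<Longrightarrow> \<exists>i<r. av (v i) = vnorm av r v"
proof -
  assume r: "1 \<le> r"
  have "vnorm av r v \<in> (\<lambda>i. av (v i)) ` {..<r}"
    unfolding vnorm_def
  proof (rule Max_in)
    have "0 \<in> {..<r}" using r by simp
    then show "(\<lambda>i. av (v i)) ` {..<r} \<noteq> {}" by blast
  qed simp
  then show ?thesis by auto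
qed

lemma vnorm_le: "1 \<le> r \<Longrightarrow> (\<And>i. i < r \<Longrightarrow> av (v i) \<le> B) \<Longrightarrow> vnorm av r v \<le> B"
  using vnorm_attained by metis

lemma vnorm_nonneg: "1 \<le> r \<Longrightarrow> 0 \<le> vnorm av r v"
  using vnorm_attained av_nonneg by metis

lemma Iset_ne: assumes sf: "is_subfield K" and r: "1 \<le> r" shows "Iset K r w \<noteq> {}"
proof -
  define l where "l i = (if i = 0 then 1 else (0::'a))" for i :: nat
  have "unimodular av K r l"
    unfolding unimodular_def
  proof
    show "\<forall>i<r. l i \<in> K" using sf_facts(1,2)[OF sf] by (simp add: l_def)
    show "Max ((\<lambda>i. av (l i)) ` {..<r}) = 1"
      by (rule Max_eqI) (use r in \<open>auto simp: l_def\<close>)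
  qed
  then show ?thesis unfolding Iset_def by blast
qed

lemma Iset_bdd: "bdd_below (Iset K r w)"
  unfolding Iset_def bdd_below_def using av_nonneg by blast

lemma I_nonneg: assumes sf: "is_subfield K" and r: "1 \<le> r" shows "0 \<le> Inf (Iset K r w)"
  by (rule cInf_greatest[OF Iset_ne[OF sf r]]) (auto simp: Iset_def av_nonneg)

lemma lowerI:
  assumes sf: "is_subfield K" and r: "1 \<le> r" and vK: "\<forall>i<r. v i \<in> K"
  shows "vnorm av r v * Inf (Iset K r w) \<le> av (\<Sum>i<r. v i * w i)"
proof -
  obtain i0 where i0: "i0 < r" "av (v i0) = vnorm av r v" using vnorm_attained[OF r] by blast
  show ?thesis
  proof (cases "v i0 = 0")
    case True
    then have "vnorm av r v = 0" using i0 by simp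
    then show ?thesis using av_nonneg by simp
  next
    case False
    define u where "u i = v i * inverse (v i0)" for i
    have uK: "\<forall>i<r. u i \<in> K" using vK i0 sf_facts(4,6)[OF sf] by (simp add: u_def)
    have "Max ((\<lambda>i. av (u i)) ` {..<r}) = 1"
    proof (rule Max_eqI)
      show "finite ((\<lambda>i. av (u i)) ` {..<r})" by simp
      show "1 \<in> (\<lambda>i. av (u i)) ` {..<r}"
      proof
        show "1 = av (u i0)" using False by (simp add: u_def)
      qed (use i0 in simp)
      fix y assume "y \<in> (\<lambda>i. av (u i)) ` {..<r}"
      then obtain i where i: "i < r" "y = av (u i)" by auto
      have "av (v i) \<le> av (v i0)" using vnorm_ge[OF i(1)] i0 by simp
      have "y = av (v i) / av (v i0)" using i by (simp add: u_def av_mult av_inverse divide_inverse)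
      then show "y \<le> 1" using av_pos[OF False] \<open>av (v i) \<le> av (v i0)\<close> by simp
    qed
    then have "unimodular av K r u" using uK by (simp add: unimodular_def)
    then have "av (\<Sum>i<r. u i * w i) \<in> Iset K r w" unfolding Iset_def by blast
    then have Ile: "Inf (Iset K r w) \<le> av (\<Sum>i<r. u i * w i)"
      by (rule cInf_lower[OF _ Iset_bdd])
    have "(\<Sum>i<r. v i * w i) = v i0 * (\<Sum>i<r. u i * w i)"
      using False by (simp add: u_def sum_distrib_left field_simps)
    then have "av (\<Sum>i<r. v i * w i) = av (v i0) * av (\<Sum>i<r. u i * w i)" by (simp add: av_mult)
    then show ?thesis using i0 Ile av_nonneg[of "v i0"] by (simp add: mult_left_mono)
  qed
qed

lemma upper_sum:
  assumes r: "1 \<le> r"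
  shows "av (\<Sum>i<r. v i * w i) \<le> vnorm av r v * vnorm av r w"
proof (rule av_sum_le)
  fix i assume i: "i < r"
  show "av (v i * w i) \<le> vnorm av r v * vnorm av r w"
    unfolding av_mult by (rule mult_mono) (use vnorm_ge[OF i] av_nonneg vnorm_nonneg[OF r] in auto)
next
  show "0 \<le> vnorm av r v * vnorm av r w" using vnorm_nonneg[OF r] by simp
qed


lemma sf_sum0: assumes sf: "is_subfield K" shows "(\<forall>i<(n::nat). f i \<in> K) \<longrightarrow> (\<Sum>i<n. f i) \<in> K"
proof (induction n)
  case 0 then show ?case using sf_facts(1)[OF sf] by simp
next
  case (Suc n) then show ?case using sf_facts(3)[OF sf] by simp
qed

lemma sf_sum: assumes sf: "is_subfield K" shows "(\<forall>i<(n::nat). f i \<in> K) \<Longrightarrow> (\<Sum>i<n. f i) \<in> K"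
  using sf_sum0[OF sf] by blast

lemma main_aux:
  fixes K :: "'a set" and \<xi> :: 'a and r :: nat and g :: "nat \<Rightarrow> nat \<Rightarrow> 'a"
  assumes sf: "is_subfield K"
    and comp: "\<forall>X. av_cauchy av X \<longrightarrow> (\<exists>L. av_lim av X L)"
    and cl: "\<forall>X L. (\<forall>n. X n \<in> K) \<longrightarrow> av_lim av X L \<longrightarrow> L \<in> K"
    and xi: "\<xi> \<noteq> 0" and r: "1 \<le> r" and gG: "g \<in> GL_K K r"
  shows "\<exists>c1 c2 c3. 0 < c1 \<and> 0 < c2 \<and> 0 < c3 \<and>
    (\<forall>w\<in>Omega K r \<xi>.
       hgt av K r w \<le> c1 * av (jfac r \<xi> g w) * inverse (vnorm av r w) \<and>
       c1 * av (jfac r \<xi> g w) * inverse (vnorm av r w) \<le> 1 \<and>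
       vnorm av r (gact r \<xi> g w) \<le> c2 * inverse (hgt av K r w) \<and>
       c3 * hgt av K r w \<le> hgt av K r (gact r \<xi> g w))"
proof -
  from gG obtain d where gK: "\<forall>i<r. \<forall>k<r. g i k \<in> K"
    and gd: "\<forall>i<r. \<forall>k<r. (\<Sum>l<r. g i l * d l k) = (if i = k then 1 else 0)"
    and dg: "\<forall>i<r. \<forall>k<r. (\<Sum>l<r. d i l * g l k) = (if i = k then 1 else 0)"
    unfolding GL_K_def by blast
  define R where "R = vnorm av r (g (r - 1))"
  define C where "C = 1 + (\<Sum>i<r. \<Sum>k<r. av (g i k))"
  define D where "D = 1 + (\<Sum>i<r. \<Sum>k<r. av (d i k))"
  have r1: "r - 1 < r" using r by simp
  have dbl: "av (f i k) \<le> (\<Sum>i<r. \<Sum>k<r. av (f i k))" if "i < r" "k < r" for f i k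
  proof -
    have "av (f i k) \<le> (\<Sum>k<r. av (f i k))"
      by (rule member_le_sum) (use that av_nonneg in auto)
    also have "\<dots> \<le> (\<Sum>i<r. \<Sum>k<r. av (f i k))"
      by (rule member_le_sum) (use that av_nonneg in \<open>auto intro: sum_nonneg\<close>)
    finally show ?thesis .
  qed
  have dbl0: "0 \<le> (\<Sum>i<r. \<Sum>k<r. av (f i k))" for f
    by (intro sum_nonneg) (simp add: av_nonneg)
  have Cg: "av (g i k) \<le> C" if "i < r" "k < r" for i k using dbl[OF that, of g] by (simp add: C_def)
  have Dd: "av (d i k) \<le> D" if "i < r" "k < r" for i k using dbl[OF that, of d] by (simp add: D_def)
  have C0: "C > 0" using dbl0[of g] by (simp add: C_def)
  have D0: "D > 0" using dbl0[of d] by (simp add: D_def)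
  have R0: "R > 0"
  proof (rule ccontr)
    assume "\<not> R > 0"
    then have "g (r - 1) l = 0" if "l < r" for l
    proof -
      have "av (g (r - 1) l) \<le> 0" using vnorm_ge[OF that, of "g (r - 1)"] \<open>\<not> R > 0\<close>
        unfolding R_def by linarith
      then have "av (g (r - 1) l) = 0" using av_nonneg[of "g (r - 1) l"] by linarith
      then show ?thesis using av_zero_iff by simp
    qed
    then have "(\<Sum>l<r. g (r - 1) l * d l (r - 1)) = 0" by simp
    then show False using gd r1 by simp
  qed
  have x0: "av \<xi> > 0" using av_pos[OF xi] .
  show ?thesis
  proof (rule exI[of _ "av \<xi> / R"], rule exI[of _ "C * av \<xi> / R"], rule exI[of _ "1 / (C * D)"], intro conjI ballI)
    show "0 < av \<xi> / R" using x0 R0 by simp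
    show "0 < C * av \<xi> / R" using x0 R0 C0 by simp
    show "0 < 1 / (C * D)" using C0 D0 by simp
    fix w assume w: "w \<in> Omega K r \<xi>"
    then have wind: "\<forall>a. (\<forall>i<r. a i \<in> K) \<longrightarrow> (\<Sum>i<r. a i * w i) = 0 \<longrightarrow> (\<forall>i<r. a i = 0)"
      and wl: "w (r - 1) = \<xi>" unfolding Omega_def by auto
    define W where "W = vnorm av r w"
    define I where "I = Inf (Iset K r w)"
    define gw where "gw = matvec r g w"
    define a where "a = av (gw (r - 1))"
    have W0: "W > 0" using vnorm_ge[OF r1, of w] wl x0 unfolding W_def by simp
    have I0: "I > 0"
    proof -
      obtain c where c0: "c > 0" and cb: "\<And>a i. (\<forall>i<r. a i \<in> K) \<Longrightarrow> i < r \<Longrightarrow> c * av (a i) \<le> av (\<Sum>i<r. a i * w i)"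
        using indep_bound[OF sf comp cl wind] by blast
      have "c \<le> I" unfolding I_def
      proof (rule cInf_greatest[OF Iset_ne[OF sf r]])
        fix y assume "y \<in> Iset K r w"
        then obtain l where y: "y = av (\<Sum>i<r. l i * w i)" and lu: "unimodular av K r l"
          unfolding Iset_def by blast
        have lK: "\<forall>i<r. l i \<in> K" and l1: "vnorm av r l = 1"
          using lu unfolding unimodular_def vnorm_def by auto
        obtain k where k: "k < r" "av (l k) = vnorm av r l" using vnorm_attained[OF r] by blast
        show "c \<le> y" using cb[OF lK k(1)] k l1 y by simp
      qed
      then show ?thesis using c0 by simp
    qed
    have gwi: "gw i = (\<Sum>k<r. g i k * w k)" for i by (simp add: gw_def matvec_def)
    have aR: "R * I \<le> a"
      unfolding a_def R_def I_def gwi using lowerI[OF sf r] gK r1 by blast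
    have aup: "a \<le> R * W" unfolding a_def R_def W_def gwi by (rule upper_sum[OF r])
    have gwC: "av (gw i) \<le> C * W" if i: "i < r" for i
      unfolding gwi
    proof (rule av_sum_le)
      fix k assume k: "k < r"
      show "av (g i k * w k) \<le> C * W"
        unfolding av_mult by (rule mult_mono) (use Cg[OF i k] vnorm_ge[OF k, of w] C0 av_nonneg in \<open>auto simp: W_def\<close>)
    next
      show "0 \<le> C * W" using C0 W0 by simp
    qed
    have "R * I > 0" using R0 I0 by simp
    then have a0: "a > 0" using aR by linarith
    have gwl0: "gw (r - 1) \<noteq> 0" using a0 unfolding a_def by auto
    have jeq: "av (jfac r \<xi> g w) = a / av \<xi>"
      by (simp add: jfac_def gw_def[symmetric] a_def av_mult av_inverse divide_inverse mult.commute)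
    have gact_eq: "gact r \<xi> g w i = inverse (jfac r \<xi> g w) * gw i" for i
      by (simp add: gact_def gw_def)
    have avg: "av (gact r \<xi> g w i) = av \<xi> / a * av (gw i)" for i
      unfolding gact_eq av_mult av_inverse jeq by simp
    have hw: "hgt av K r w = inverse W * I" by (simp add: hgt_eq W_def I_def)
    have IaR: "I \<le> a / R" unfolding pos_le_divide_eq[OF R0] using aR by (simp only: mult.commute[of I R])
    have c1j: "av \<xi> / R * av (jfac r \<xi> g w) * inverse (vnorm av r w) = a / R * inverse W"
      using x0 by (simp add: jeq W_def)
    show "hgt av K r w \<le> av \<xi> / R * av (jfac r \<xi> g w) * inverse (vnorm av r w)"
    proof -
      have "inverse W * I \<le> inverse W * (a / R)" by (rule mult_left_mono[OF IaR]) (use W0 in simp)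
      then show ?thesis unfolding c1j hw by (simp only: mult.commute[of "a / R" "inverse W"])
    qed
    show "av \<xi> / R * av (jfac r \<xi> g w) * inverse (vnorm av r w) \<le> 1"
      unfolding c1j using aup R0 W0 by (simp add: field_simps)
    have vG: "vnorm av r (gact r \<xi> g w) \<le> av \<xi> / a * (C * W)"
    proof (rule vnorm_le[OF r])
      fix i assume i: "i < r"
      show "av (gact r \<xi> g w i) \<le> av \<xi> / a * (C * W)"
        unfolding avg by (rule mult_left_mono[OF gwC[OF i]]) (use x0 a0 in simp)
    qed
    have xa: "av \<xi> / a \<le> av \<xi> / (R * I)"
      by (rule divide_left_mono[OF aR]) (use x0 R0 I0 a0 in auto)
    have "av \<xi> / a * (C * W) \<le> av \<xi> / (R * I) * (C * W)"
      by (rule mult_right_mono[OF xa]) (use C0 W0 in simp)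
    also have "\<dots> = C * av \<xi> / R * inverse (hgt av K r w)"
      unfolding hw using R0 I0 W0 by (simp add: field_simps)
    finally show "vnorm av r (gact r \<xi> g w) \<le> C * av \<xi> / R * inverse (hgt av K r w)"
      using vG by linarith
    define G where "G = gact r \<xi> g w"
    have Gl: "G (r - 1) = \<xi>"
      unfolding G_def gact_eq jfac_def gw_def[symmetric] using xi gwl0 by (simp add: field_simps)
    have vG0: "vnorm av r G > 0" using vnorm_ge[OF r1, of G] Gl x0 by simp
    have IG: "av \<xi> / a * (I / D) \<le> Inf (Iset K r G)"
    proof (rule cInf_greatest[OF Iset_ne[OF sf r]])
      fix y assume "y \<in> Iset K r G"
      then obtain l where y: "y = av (\<Sum>i<r. l i * G i)" and lu: "unimodular av K r l"
        unfolding Iset_def by blast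
      have lK: "\<forall>i<r. l i \<in> K" and l1: "vnorm av r l = 1"
        using lu unfolding unimodular_def vnorm_def by auto
      define u where "u k = (\<Sum>i<r. l i * g i k)" for k
      have uK: "\<forall>k<r. u k \<in> K" unfolding u_def
        using sf_sum[OF sf] sf_facts(4)[OF sf] lK gK by simp
      have s1: "(\<Sum>i<r. l i * G i) = inverse (jfac r \<xi> g w) * (\<Sum>k<r. u k * w k)"
      proof -
        have "(\<Sum>i<r. l i * G i) = inverse (jfac r \<xi> g w) * (\<Sum>i<r. l i * gw i)"
          by (simp add: G_def gact_eq sum_distrib_left algebra_simps)
        moreover have "(\<Sum>i<r. l i * gw i) = (\<Sum>k<r. u k * w k)"
        proof -
          have "(\<Sum>i<r. l i * gw i) = (\<Sum>i<r. \<Sum>k<r. l i * g i k * w k)"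
            by (simp add: gwi sum_distrib_left mult.assoc)
          also have "\<dots> = (\<Sum>k<r. \<Sum>i<r. l i * g i k * w k)" by (rule sum.swap)
          also have "\<dots> = (\<Sum>k<r. u k * w k)" by (simp add: u_def sum_distrib_right)
          finally show ?thesis .
        qed
        ultimately show ?thesis by simp
      qed
      have yeq: "y = av \<xi> / a * av (\<Sum>k<r. u k * w k)"
        unfolding y s1 av_mult av_inverse jeq by simp
      obtain k0 where k0: "k0 < r" "av (l k0) = vnorm av r l" using vnorm_attained[OF r] by blast
      have lk: "l k0 = (\<Sum>m<r. u m * d m k0)"
      proof -
        have "(\<Sum>m<r. u m * d m k0) = (\<Sum>m<r. \<Sum>i<r. l i * g i m * d m k0)"
          by (simp add: u_def sum_distrib_right)
        also have "\<dots> = (\<Sum>i<r. \<Sum>m<r. l i * g i m * d m k0)" by (rule sum.swap)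
        also have "\<dots> = (\<Sum>i<r. l i * (\<Sum>m<r. g i m * d m k0))"
          by (simp add: sum_distrib_left mult.assoc)
        also have "\<dots> = (\<Sum>i<r. l i * (if i = k0 then 1 else 0))"
          by (rule sum.cong) (use gd k0 in auto)
        also have "\<dots> = (\<Sum>i<r. if i = k0 then l i else 0)" by (rule sum.cong) auto
        also have "\<dots> = l k0" using k0 by (simp add: sum.delta)
        finally show ?thesis by simp
      qed
      have "1 \<le> vnorm av r u * D"
      proof -
        have "av (l k0) \<le> vnorm av r u * D" unfolding lk
        proof (rule av_sum_le)
          fix m assume m: "m < r"
          show "av (u m * d m k0) \<le> vnorm av r u * D"
            unfolding av_mult by (rule mult_mono) (use vnorm_ge[OF m, of u] Dd[OF m k0(1)] vnorm_nonneg[OF r] av_nonneg in auto)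
        next
          show "0 \<le> vnorm av r u * D" using vnorm_nonneg[OF r] D0 by simp
        qed
        then show ?thesis using k0 l1 by simp
      qed
      then have "I * 1 \<le> I * (vnorm av r u * D)" by (rule mult_left_mono) (use I0 in simp)
      then have "I / D \<le> vnorm av r u * I" using D0 by (simp add: divide_le_eq algebra_simps)
      also have "\<dots> \<le> av (\<Sum>k<r. u k * w k)" unfolding I_def by (rule lowerI[OF sf r uK])
      finally have "I / D \<le> av (\<Sum>k<r. u k * w k)" .
      then show "av \<xi> / a * (I / D) \<le> y" unfolding yeq
        by (rule mult_left_mono) (use x0 a0 in simp)
    qed
    have "inverse (av \<xi> / a * (C * W)) \<le> inverse (vnorm av r G)"
      by (rule le_imp_inverse_le[OF vG[folded G_def] vG0])
    then have "inverse (av \<xi> / a * (C * W)) * (av \<xi> / a * (I / D)) \<le> inverse (vnorm av r G) * Inf (Iset K r G)"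
      by (rule mult_mono[OF _ IG]) (use vG0 x0 a0 I0 D0 in simp_all)
    moreover have "inverse (av \<xi> / a * (C * W)) * (av \<xi> / a * (I / D)) = 1 / (C * D) * hgt av K r w"
      unfolding hw using x0 a0 C0 W0 D0 by (simp add: field_simps)
    ultimately show "1 / (C * D) * hgt av K r w \<le> hgt av K r (gact r \<xi> g w)"
      by (simp add: hgt_eq G_def)
  qed
qed

end

theorem lemma3p5:
  fixes av :: "'a::field \<Rightarrow> real" and K :: "'a set" and \<xi> :: 'a
    and r :: nat and g :: "nat \<Rightarrow> nat \<Rightarrow> 'a"
  assumes "Cinf_setup av K" and "\<xi> \<noteq> 0" and "1 \<le> r" and "g \<in> GL_K K r"
  shows "\<exists>c1 c2 c3. 0 < c1 \<and> 0 < c2 \<and> 0 < c3 \<and>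
    (\<forall>w\<in>Omega K r \<xi>.
       hgt av K r w \<le> c1 * av (jfac r \<xi> g w) * inverse (vnorm av r w) \<and>
       c1 * av (jfac r \<xi> g w) * inverse (vnorm av r w) \<le> 1 \<and>
       vnorm av r (gact r \<xi> g w) \<le> c2 * inverse (hgt av K r w) \<and>
       c3 * hgt av K r w \<le> hgt av K r (gact r \<xi> g w))"
proof -
  have na: "nonarch_abs av" and sf: "is_subfield K"
    and comp: "\<forall>X. av_cauchy av X \<longrightarrow> (\<exists>L. av_lim av X L)"
    and cl: "\<forall>X L. (\<forall>n. X n \<in> K) \<longrightarrow> av_lim av X L \<longrightarrow> L \<in> K"
    using assms(1) unfolding Cinf_setup_def by blast+
  show ?thesis by (rule main_aux[OF na sf comp cl assms(2,3,4)])
qed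

end
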